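(* Assume (A1), (A2), (A3), (A4) and let $0<\lambda<\lambda_{\max}$, $T=\lfloor1/\lambda\rfloor$. Then for all $n\in\mathbb{N}$ and $k\in\{1,\dots,T\}$, \[ \mathbb{E}\big|H(\theta^\lambda_{nT+k-1},X_{nT+k})-h(\theta^\lambda_{nT+k-1})\big|^2\le e^{-a\lambda nT}\bar\sigma_Z\mathbb{E}[V_2(\theta_0)]+\tilde\sigma_Z, \] where $\bar\sigma_Z=4\mathbb{E}[K_\rho(X_0)](L^2+L_1^2)$ and $\tilde\sigma_Z=4\mathbb{E}[K_\rho(X_0)](L^2+L_1^2)c_1(\lambda_{\max}+a^{-1})+4|h(0)|^2+8L_2^2\mathbb{E}[K_\rho(X_0)]+8\mathbb{E}[F_*^2(X_0)]$.
   Context: Let $d,m\ge1$ be integers and $\beta>0$. On a probability space, let $\theta_0$ be an $\mathbb{R}^d$-valued random variable, $(X_n)_{n\in\mathbb{N}}$ an i.i.d. sequence of $\mathbb{R}^m$-valued random variables, and $(\xi_n)_{n\ge1}$ an i.i.d. sequence of standard Gaussian vectors in $\mathbb{R}^d$, with $\theta_0$, $(X_n)$, $(\xi_n)$ mutually independent. Let $H:\mathbb{R}^d\times\mathbb{R}^m\to\mathbb{R}^d$ be measurable with $\mathbb{E}|H(\theta,X_0)|<\infty$ for all $\theta$, and put $h(\theta)=\mathbb{E}[H(\theta,X_0)]$. For step size $\lambda>0$ the SGLD algorithm is $\theta^\lambda_0=\theta_0$, $\theta^\lambda_{n+1}=\theta^\lambda_n-\lambda H(\theta^\lambda_n,X_{n+1})+\sqrt{2\lambda/\beta}\,\xi_{n+1}$.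 $V_2(\theta)=1+|\theta|^2$. For $x\in\mathbb{R}^m$, $K_\rho(x)=(1+2|x|)^{4\rho+4}$. (A1) $H=F+G$ with $F,G:\mathbb{R}^d\times\mathbb{R}^m\to\mathbb{R}^d$; there are $L_1,L_2>0$, $\rho\ge0$ with $|F(\theta,x)-F(\theta',x')|\le(1+|x|+|x'|)^\rho(L_1|\theta-\theta'|+L_2|x-x'|)$ for all $\theta,\theta'\in\mathbb{R}^d$, $x,x'\in\mathbb{R}^m$, and there is $K_1:\mathbb{R}^m\to[0,\infty)$ with $|G(\theta,x)|\le K_1(x)$ for all $\theta,x$. Set $F_*(x)=|F(0,0)|+K_1(x)$. (A2) $\mathbb{E}|\theta_0|^4<\infty$, $\mathbb{E}|X_0|^{4\rho+4}<\infty$, $\mathbb{E}[K_1(X_0)^4]<\infty$. (A3) There is $L>0$ with $\mathbb{E}|H(\theta,X_0)-H(\theta',X_0)|\le L|\theta-\theta'|$ for all $\theta,\theta'$. (A4) There are $A:\mathbb{R}^m\to\mathbb{R}^{d\times d}$ with $\langle y,A(x)y\rangle\ge0$ for all $x\in\mathbb{R}^m,y\in\mathbb{R}^d$, and $b:\mathbb{R}^m\to\mathbb{R}$, such that $\langle F(\theta,x),\theta\rangle\ge\langle\theta,A(x)\theta\rangle-b(x)$ for all $\theta,x$; the smallest eigenvalue $a$ of $\mathbb{E}[A(X_0)]$ is positive and $b:=\mathbb{E}[b(X_0)]>0$. $\lambda_{\max}=\min\Big\{\dfrac{\min\{a,a^{1/3}\}}{24(1+L_1)^2\mathbb{E}[K_\rho(X_0)]},\dfrac{1}{4a}\Big\}$;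 $c_1=c_0+2d/\beta$ with $c_0=8\mathbb{E}[K_1^2(X_0)]a^{-1}+2b+4\lambda_{\max}L_2^2\mathbb{E}[K_\rho(X_0)]+4\lambda_{\max}\mathbb{E}[F_*^2(X_0)]$. *)

theory Defs
  imports "HOL-Probability.Probability"
begin

text \<open>Indices for the family (theta_0, X_n, xi_n) whose mutual independence is assumed.\<close>
datatype sgld_idx = Init | Dat nat | Noise nat

definition gen_events :: "'w measure \<Rightarrow> ('w \<Rightarrow> 'b::topological_space) \<Rightarrow> 'w set set" where
  "gen_events M f = {f -` A \<inter> space M | A. A \<in> sets borel}"

definition std_gaussian_vec :: "'w measure \<Rightarrow> ('w \<Rightarrow> real^'d) \<Rightarrow> bool" where
  "std_gaussian_vec M \<xi> \<longleftrightarrow>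
     \<xi> \<in> borel_measurable M \<and>
     prob_space.indep_vars M (\<lambda>_. borel) (\<lambda>i \<omega>. \<xi> \<omega> $ i) UNIV \<and>
     (\<forall>i. distributed M lborel (\<lambda>\<omega>. \<xi> \<omega> $ i) (\<lambda>x. ennreal (std_normal_density x)))"

definition is_eigenvalue :: "real^'n^'n \<Rightarrow> real \<Rightarrow> bool" where
  "is_eigenvalue A \<mu> \<longleftrightarrow> (\<exists>v. v \<noteq> 0 \<and> A *v v = \<mu> *\<^sub>R v)"

definition smallest_eigenvalue :: "real^'n^'n \<Rightarrow> real \<Rightarrow> bool" where
  "smallest_eigenvalue A a \<longleftrightarrow> is_eigenvalue A a \<and> (\<forall>\<mu>. is_eigenvalue A \<mu> \<longrightarrow> a \<le> \<mu>)"

primrec sgld :: "(real^'d \<Rightarrow> real^'m \<Rightarrow> real^'d) \<Rightarrow> (nat \<Rightarrow> 'w \<Rightarrow> real^'m) \<Rightarrow>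
    (nat \<Rightarrow> 'w \<Rightarrow> real^'d) \<Rightarrow> real \<Rightarrow> real \<Rightarrow> ('w \<Rightarrow> real^'d) \<Rightarrow> nat \<Rightarrow> 'w \<Rightarrow> real^'d" where
  "sgld H X \<xi> \<beta> lam \<theta>0 0 = \<theta>0"
| "sgld H X \<xi> \<beta> lam \<theta>0 (Suc n) = (\<lambda>\<omega>.
     sgld H X \<xi> \<beta> lam \<theta>0 n \<omega> - lam *\<^sub>R H (sgld H X \<xi> \<beta> lam \<theta>0 n \<omega>) (X (Suc n) \<omega>)
     + sqrt (2 * lam / \<beta>) *\<^sub>R \<xi> (Suc n) \<omega>)"

definition V2 :: "real^'d \<Rightarrow> real" where
  "V2 \<theta> = 1 + (norm \<theta>)\<^sup>2"

definition K_rho :: "real \<Rightarrow> real^'m \<Rightarrow> real" where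
  "K_rho \<rho> x = (1 + 2 * norm x) powr (4 * \<rho> + 4)"

end

theory Submission
  imports Defs
begin



lemma (in prob_space) var_bound:
  fixes Y :: "'a \<Rightarrow> 'b::{banach,second_countable_topology}" and u :: "'a \<Rightarrow> real"
  assumes Yi: "integrable M Y" and ui: "integrable M u" and u2i: "integrable M (\<lambda>x. (u x)\<^sup>2)"
    and bnd: "\<And>x. x \<in> space M \<Longrightarrow> norm (Y x - c) \<le> u x"
  shows "(\<integral>\<^sup>+x. ennreal ((norm (Y x - (\<integral>y. Y y \<partial>M)))\<^sup>2) \<partial>M) \<le> ennreal (4 * (\<integral>x. (u x)\<^sup>2 \<partial>M))"
proof -
  let ?E = "\<integral>x. u x \<partial>M"
  have "norm (c - (\<integral>y. Y y \<partial>M)) = norm (\<integral>y. c - Y y \<partial>M)"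
    using Yi prob_space by (simp add: Bochner_Integration.integral_diff)
  also have "\<dots> \<le> (\<integral>y. norm (c - Y y) \<partial>M)" by (rule integral_norm_bound)
  also have "\<dots> \<le> ?E"
    using Yi ui bnd by (intro integral_mono) (auto simp: norm_minus_commute)
  finally have cE: "norm (c - (\<integral>y. Y y \<partial>M)) \<le> ?E" .
  have pw: "(norm (Y x - (\<integral>y. Y y \<partial>M)))\<^sup>2 \<le> 2 * (u x)\<^sup>2 + 2 * ?E\<^sup>2" if x: "x \<in> space M" for x
  proof -
    have "norm (Y x - (\<integral>y. Y y \<partial>M)) \<le> norm (Y x - c) + norm (c - (\<integral>y. Y y \<partial>M))"
      using norm_triangle_ineq[of "Y x - c" "c - (\<integral>y. Y y \<partial>M)"] by simp
    also have "\<dots> \<le> u x + ?E" using bnd[OF x] cE by simp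
    finally have h: "norm (Y x - (\<integral>y. Y y \<partial>M)) \<le> u x + ?E" .
    have "(norm (Y x - (\<integral>y. Y y \<partial>M)))\<^sup>2 \<le> (u x + ?E)\<^sup>2"
      by (rule power_mono[OF h]) simp
    also have "\<dots> \<le> 2 * (u x)\<^sup>2 + 2 * ?E\<^sup>2"
      proof -
      have "0 \<le> (u x - ?E)\<^sup>2" by simp
      then show ?thesis by (simp add: power2_eq_square algebra_simps)
    qed
    finally show ?thesis .
  qed
  have "(\<integral>\<^sup>+x. ennreal ((norm (Y x - (\<integral>y. Y y \<partial>M)))\<^sup>2) \<partial>M) \<le> (\<integral>\<^sup>+x. ennreal (2 * (u x)\<^sup>2 + 2 * ?E\<^sup>2) \<partial>M)"
    using pw by (intro nn_integral_mono ennreal_leI) auto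
  also have "\<dots> = ennreal (\<integral>x. 2 * (u x)\<^sup>2 + 2 * ?E\<^sup>2 \<partial>M)"
    using u2i by (intro nn_integral_eq_integral) auto
  also have "(\<integral>x. 2 * (u x)\<^sup>2 + 2 * ?E\<^sup>2 \<partial>M) = 2 * (\<integral>x. (u x)\<^sup>2 \<partial>M) + 2 * ?E\<^sup>2"
    using u2i prob_space by (simp add: Bochner_Integration.integral_add)
  also have "\<dots> \<le> 4 * (\<integral>x. (u x)\<^sup>2 \<partial>M)"
    using variance_eq[OF ui u2i] variance_positive[of u] by simp
  finally show ?thesis by (simp add: ennreal_leI)
qed


lemma gen_events_meas:
  assumes "gen_events M f \<subseteq> S" "S \<subseteq> Pow (space M)"
  shows "f \<in> borel_measurable (sigma (space M) S)"
proof (rule measurableI)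
  fix A :: "'b set" assume "A \<in> sets borel"
  then have "f -` A \<inter> space M \<in> S" using assms(1) by (auto simp: gen_events_def)
  then show "f -` A \<inter> space (sigma (space M) S) \<in> sets (sigma (space M) S)"
    using assms(2) by (simp add: sets_measure_of space_measure_of sigma_sets.Basic)
qed auto

lemma gen_events_Int_stable: "Int_stable (gen_events M f)"
  unfolding Int_stable_def gen_events_def
proof clarify
  fix A B :: "'b set" assume "A \<in> sets borel" "B \<in> sets borel"
  then show "\<exists>C. (f -` A \<inter> space M) \<inter> (f -` B \<inter> space M) = f -` C \<inter> space M \<and> C \<in> sets borel"
    by (intro exI[of _ "A \<inter> B"]) auto
qed

lemma gen_events_sets: "f \<in> borel_measurable M \<Longrightarrow> gen_events M f \<subseteq> sets M"
  unfolding gen_events_def by auto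

lemma gen_events_Pow: "gen_events M f \<subseteq> Pow (space M)"
  unfolding gen_events_def by auto

lemma le_1_plus_sq: "(y::real) \<le> 1 + y\<^sup>2"
proof -
  have "0 \<le> (y - 1)\<^sup>2" by simp
  then have "2*y \<le> 1 + y\<^sup>2" using power2_diff[of y 1] by simp
  show ?thesis
  proof (cases "y \<ge> 0")
    case False
    have "0 \<le> y\<^sup>2" by simp
    with False show ?thesis by linarith
  qed (use \<open>2*y \<le> 1 + y\<^sup>2\<close> in linarith)
qed

theorem lemmaA1:
  fixes M :: "'w measure"
    and \<theta>0 :: "'w \<Rightarrow> real^'d"
    and X :: "nat \<Rightarrow> 'w \<Rightarrow> real^'m"
    and \<xi> :: "nat \<Rightarrow> 'w \<Rightarrow> real^'d"
    and H F G :: "real^'d \<Rightarrow> real^'m \<Rightarrow> real^'d"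
    and K1 :: "real^'m \<Rightarrow> real"
    and A :: "real^'m \<Rightarrow> real^'d^'d"
    and b :: "real^'m \<Rightarrow> real"
    and \<beta> L1 L2 \<rho> L lam :: real
  defines "h \<equiv> (\<lambda>\<theta>. \<integral>\<omega>. H \<theta> (X 0 \<omega>) \<partial>M)"
    and "a \<equiv> (THE a. smallest_eigenvalue (\<integral>\<omega>. A (X 0 \<omega>) \<partial>M) a)"
    and "bb \<equiv> (\<integral>\<omega>. b (X 0 \<omega>) \<partial>M)"
    and "EK \<equiv> (\<integral>\<omega>. K_rho \<rho> (X 0 \<omega>) \<partial>M)"
    and "Fstar \<equiv> (\<lambda>x. norm (F 0 0) + K1 x)"
  defines "lmax \<equiv> min (min a (a powr (1/3)) / (24 * (1 + L1)\<^sup>2 * EK)) (1 / (4 * a))"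
  defines "c0 \<equiv> 8 * (\<integral>\<omega>. (K1 (X 0 \<omega>))\<^sup>2 \<partial>M) / a + 2 * bb + 4 * lmax * L2\<^sup>2 * EK
                 + 4 * lmax * (\<integral>\<omega>. (Fstar (X 0 \<omega>))\<^sup>2 \<partial>M)"
  defines "c1 \<equiv> c0 + 2 * real CARD('d) / \<beta>"
  defines "sbar \<equiv> 4 * EK * (L\<^sup>2 + L1\<^sup>2)"
    and "stilde \<equiv> 4 * EK * (L\<^sup>2 + L1\<^sup>2) * c1 * (lmax + 1 / a) + 4 * (norm (h 0))\<^sup>2
                   + 8 * L2\<^sup>2 * EK + 8 * (\<integral>\<omega>. (Fstar (X 0 \<omega>))\<^sup>2 \<partial>M)"
  defines "T \<equiv> nat \<lfloor>1 / lam\<rfloor>"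
  defines "\<theta> \<equiv> sgld H X \<xi> \<beta> lam \<theta>0"
  assumes M: "prob_space M"
    and \<beta>_pos: "\<beta> > 0"
    \<comment> \<open>random variables, independence, i.i.d.\<close>
    and \<theta>0_meas: "\<theta>0 \<in> borel_measurable M"
    and X_meas: "\<And>n. X n \<in> borel_measurable M"
    and X_ident: "\<And>n. distr M borel (X n) = distr M borel (X 0)"
    and \<xi>_gauss: "\<And>n. n \<ge> 1 \<Longrightarrow> std_gaussian_vec M (\<xi> n)"
    and indep: "prob_space.indep_sets M
                  (\<lambda>i. case i of Init \<Rightarrow> gen_events M \<theta>0
                               | Dat n \<Rightarrow> gen_events M (X n)
                               | Noise n \<Rightarrow> gen_events M (\<xi> n))
                  ({Init} \<union> range Dat \<union> Noise ` {1..})"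
    \<comment> \<open>H measurable with E|H(theta,X_0)| finite\<close>
    and H_meas: "(\<lambda>(t, x). H t x) \<in> borel_measurable borel"
    and H_int: "\<And>t. integrable M (\<lambda>\<omega>. norm (H t (X 0 \<omega>)))"
    \<comment> \<open>(A1)\<close>
    and A1_split: "\<And>t x. H t x = F t x + G t x"
    and L1_pos: "L1 > 0" and L2_pos: "L2 > 0" and \<rho>_nonneg: "\<rho> \<ge> 0"
    and A1_F: "\<And>t t' x x'. norm (F t x - F t' x')
                 \<le> (1 + norm x + norm x') powr \<rho> * (L1 * norm (t - t') + L2 * norm (x - x'))"
    and K1_nonneg: "\<And>x. K1 x \<ge> 0"
    and A1_G: "\<And>t x. norm (G t x) \<le> K1 x"
    \<comment> \<open>(A2)\<close>
    and A2_\<theta>0: "integrable M (\<lambda>\<omega>. (norm (\<theta>0 \<omega>)) ^ 4)"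
    and A2_X: "integrable M (\<lambda>\<omega>. (norm (X 0 \<omega>)) powr (4 * \<rho> + 4))"
    and A2_K1: "integrable M (\<lambda>\<omega>. (K1 (X 0 \<omega>)) ^ 4)"
    \<comment> \<open>(A3)\<close>
    and L_pos: "L > 0"
    and A3: "\<And>t t'. (\<integral>\<omega>. norm (H t (X 0 \<omega>) - H t' (X 0 \<omega>)) \<partial>M) \<le> L * norm (t - t')"
    \<comment> \<open>(A4)\<close>
    and A4_psd: "\<And>x y. y \<bullet> (A x *v y) \<ge> 0"
    and A4_F: "\<And>t x. F t x \<bullet> t \<ge> t \<bullet> (A x *v t) - b x"
    and A_int: "integrable M (\<lambda>\<omega>. A (X 0 \<omega>))"
    and EA_sym: "transpose (\<integral>\<omega>. A (X 0 \<omega>) \<partial>M) = (\<integral>\<omega>. A (X 0 \<omega>) \<partial>M)"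
    and a_ex: "\<exists>a. smallest_eigenvalue (\<integral>\<omega>. A (X 0 \<omega>) \<partial>M) a"
    and a_pos: "a > 0"
    and b_int: "integrable M (\<lambda>\<omega>. b (X 0 \<omega>))"
    and b_pos: "bb > 0"
    \<comment> \<open>step size\<close>
    and lam_pos: "0 < lam" and lam_lt: "lam < lmax"
  shows "\<forall>n k. 1 \<le> k \<and> k \<le> T \<longrightarrow>
           (\<integral>\<^sup>+\<omega>. ennreal ((norm (H (\<theta> (n * T + k - 1) \<omega>) (X (n * T + k) \<omega>)
                                  - h (\<theta> (n * T + k - 1) \<omega>)))\<^sup>2) \<partial>M)
           \<le> ennreal (exp (- a * lam * real (n * T)) * sbar * (\<integral>\<omega>. V2 (\<theta>0 \<omega>) \<partial>M) + stilde)"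
  proof -
  interpret P: prob_space M by (rule M)
  note X_meas[measurable]
  have lmax_pos: "lmax > 0" using lam_pos lam_lt by simp
  have EK_pos: "EK > 0"
  proof (rule ccontr)
    assume "\<not> EK > 0"
    then have "24 * (1 + L1)\<^sup>2 * EK \<le> 0" by (simp add: mult_nonneg_nonpos)
    then have "min a (a powr (1/3)) / (24 * (1 + L1)\<^sup>2 * EK) \<le> 0"
      using a_pos by (intro divide_nonneg_nonpos) auto
    then have "lmax \<le> 0" unfolding lmax_def by linarith
    then show False using lmax_pos by simp
  qed
  have K_int: "integrable M (\<lambda>\<omega>. K_rho \<rho> (X 0 \<omega>))"
  proof (rule ccontr)
    assume "\<not> ?thesis"
    then have "EK = 0" unfolding EK_def by (rule not_integrable_integral_eq)
    then show False using EK_pos by simp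
  qed
  have K14m: "(\<lambda>\<omega>. (K1 (X 0 \<omega>)) ^ 4) \<in> borel_measurable M"
    using A2_K1 by (rule borel_measurable_integrable)
  have K1m: "(\<lambda>\<omega>. K1 (X 0 \<omega>)) \<in> borel_measurable M"
  proof -
    have "(\<lambda>\<omega>. root 4 ((K1 (X 0 \<omega>)) ^ 4)) \<in> borel_measurable M"
      using measurable_compose[OF K14m borel_measurable_root] by (simp add: comp_def)
    moreover have "\<And>\<omega>. root 4 ((K1 (X 0 \<omega>)) ^ 4) = K1 (X 0 \<omega>)"
      using K1_nonneg by (simp add: real_root_power_cancel)
    ultimately show ?thesis by simp
  qed
  have Fs_int: "integrable M (\<lambda>\<omega>. (Fstar (X 0 \<omega>))\<^sup>2)"
  proof (rule Bochner_Integration.integrable_bound)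
    show "integrable M (\<lambda>\<omega>. 2 * (norm (F 0 0))\<^sup>2 + 2 + 2 * (K1 (X 0 \<omega>)) ^ 4)"
      using A2_K1 by simp
    show "(\<lambda>\<omega>. (Fstar (X 0 \<omega>))\<^sup>2) \<in> borel_measurable M"
      unfolding Fstar_def using K1m by measurable
    show "AE \<omega> in M. norm ((Fstar (X 0 \<omega>))\<^sup>2) \<le> norm (2 * (norm (F 0 0))\<^sup>2 + 2 + 2 * (K1 (X 0 \<omega>)) ^ 4)"
    proof (rule AE_I2)
      fix \<omega>
      define k where "k = K1 (X 0 \<omega>)"
      define f where "f = norm (F 0 (0::real^'m))"
      have k0: "k \<ge> 0" "f \<ge> 0" using K1_nonneg by (auto simp: k_def f_def)
      have "(f + k)\<^sup>2 \<le> 2 * f\<^sup>2 + 2 * k\<^sup>2"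
        using zero_le_square[of "f - k"] by (simp add: power2_eq_square algebra_simps)
      moreover have "k\<^sup>2 \<le> 1 + k ^ 4"
        using le_1_plus_sq[of "k\<^sup>2"] by (simp add: power_mult[symmetric])
      ultimately have "(f + k)\<^sup>2 \<le> 2 * f\<^sup>2 + 2 + 2 * k ^ 4" by linarith
      then show "norm ((Fstar (X 0 \<omega>))\<^sup>2) \<le> norm (2 * (norm (F 0 0))\<^sup>2 + 2 + 2 * (K1 (X 0 \<omega>)) ^ 4)"
        using k0 by (simp add: Fstar_def k_def[symmetric] f_def[symmetric])
    qed
  qed
  define B where "B = 8 * L2\<^sup>2 * EK + 8 * (\<integral>\<omega>. (Fstar (X 0 \<omega>))\<^sup>2 \<partial>M)"
  have Hm: "(\<lambda>p. H (fst p) (snd p)) \<in> borel_measurable (borel \<Otimes>\<^sub>M borel)"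
    using H_meas by (simp add: borel_prod case_prod_beta')
  have Hcomp: "(\<lambda>\<omega>. H (f \<omega>) (g \<omega>)) \<in> borel_measurable N"
    if "f \<in> borel_measurable N" "g \<in> borel_measurable N" for N :: "'z measure" and f g
    using measurable_compose[OF measurable_Pair[OF that] Hm] by (simp add: comp_def)
  have fixed: "(\<integral>\<^sup>+\<omega>. ennreal ((norm (H t (X 0 \<omega>) - h t))\<^sup>2) \<partial>M) \<le> ennreal B" for t
  proof -
    define u where "u \<omega> = L2 * (1 + 2 * norm (X 0 \<omega>)) powr (2 * \<rho> + 2) + Fstar (X 0 \<omega>)" for \<omega>
    have um: "u \<in> borel_measurable M" unfolding u_def Fstar_def using K1m by measurable
    have Ksq: "((1 + 2 * norm x) powr (2 * \<rho> + 2))\<^sup>2 = K_rho \<rho> x" for x :: "real^'m"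
      unfolding K_rho_def by (simp add: power2_eq_square powr_add[symmetric])
    have Fs0: "Fstar x \<ge> 0" for x unfolding Fstar_def using K1_nonneg[of x] by simp
    have u0: "u \<omega> \<ge> 0" for \<omega> unfolding u_def using Fs0 L2_pos by simp
    have u2: "(u \<omega>)\<^sup>2 \<le> 2 * L2\<^sup>2 * K_rho \<rho> (X 0 \<omega>) + 2 * (Fstar (X 0 \<omega>))\<^sup>2" for \<omega>
    proof -
      define p where "p = L2 * (1 + 2 * norm (X 0 \<omega>)) powr (2 * \<rho> + 2)"
      define q where "q = Fstar (X 0 \<omega>)"
      have "(p + q)\<^sup>2 \<le> 2 * p\<^sup>2 + 2 * q\<^sup>2"
        using zero_le_square[of "p - q"] by (simp add: power2_eq_square algebra_simps)
      moreover have "p\<^sup>2 = L2\<^sup>2 * K_rho \<rho> (X 0 \<omega>)"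
        unfolding p_def power_mult_distrib Ksq ..
      ultimately show ?thesis unfolding u_def p_def[symmetric] q_def[symmetric] by simp
    qed
    have u2i: "integrable M (\<lambda>\<omega>. (u \<omega>)\<^sup>2)"
    proof (rule Bochner_Integration.integrable_bound)
      show "integrable M (\<lambda>\<omega>. 2 * L2\<^sup>2 * K_rho \<rho> (X 0 \<omega>) + 2 * (Fstar (X 0 \<omega>))\<^sup>2)"
        using K_int Fs_int by simp
      show "(\<lambda>\<omega>. (u \<omega>)\<^sup>2) \<in> borel_measurable M" using um by measurable
      show "AE \<omega> in M. norm ((u \<omega>)\<^sup>2) \<le> norm (2 * L2\<^sup>2 * K_rho \<rho> (X 0 \<omega>) + 2 * (Fstar (X 0 \<omega>))\<^sup>2)"
        using u2 order_trans[OF zero_le_power2 u2] by (intro AE_I2) simp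
    qed
    have ui: "integrable M u"
    proof (rule Bochner_Integration.integrable_bound)
      show "integrable M (\<lambda>\<omega>. 1 + (u \<omega>)\<^sup>2)" using u2i by simp
      show "u \<in> borel_measurable M" by (rule um)
      show "AE \<omega> in M. norm (u \<omega>) \<le> norm (1 + (u \<omega>)\<^sup>2)"
      proof (rule AE_I2)
        fix \<omega>
        have "u \<omega> \<le> 1 + (u \<omega>)\<^sup>2" by (rule le_1_plus_sq)
        then show "norm (u \<omega>) \<le> norm (1 + (u \<omega>)\<^sup>2)" using u0[of \<omega>] by simp
      qed
    qed
    have Ym: "(\<lambda>\<omega>. H t (X 0 \<omega>)) \<in> borel_measurable M"
      using Hcomp[of "\<lambda>_. t" M "X 0"] by simp
    have Yi: "integrable M (\<lambda>\<omega>. H t (X 0 \<omega>))"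
      using H_int[of t] integrable_norm_iff[OF Ym] by simp
    have bnd: "norm (H t (X 0 \<omega>) - F t 0) \<le> u \<omega>" for \<omega>
    proof -
      define x where "x = X 0 \<omega>"
      have r: "(1 + norm x) powr \<rho> * norm x \<le> (1 + 2 * norm x) powr (2 * \<rho> + 2)"
      proof -
        have "(1 + norm x) powr \<rho> \<le> (1 + 2 * norm x) powr \<rho>"
          by (intro powr_mono2) (auto simp: \<rho>_nonneg)
        moreover have "norm x \<le> (1 + 2 * norm x) powr 1" by simp
        ultimately have "(1 + norm x) powr \<rho> * norm x \<le> (1 + 2 * norm x) powr \<rho> * (1 + 2 * norm x) powr 1"
          by (intro mult_mono) auto
        also have "\<dots> = (1 + 2 * norm x) powr (\<rho> + 1)" by (simp add: powr_add)
        also have "\<dots> \<le> (1 + 2 * norm x) powr (2 * \<rho> + 2)"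
          by (intro powr_mono) (auto simp: \<rho>_nonneg)
        finally show ?thesis .
      qed
      have "norm (H t x - F t 0) = norm ((F t x - F t 0) + G t x)"
        by (simp add: A1_split algebra_simps)
      also have "\<dots> \<le> norm (F t x - F t 0) + norm (G t x)" by (rule norm_triangle_ineq)
      also have "\<dots> \<le> (1 + norm x) powr \<rho> * (L2 * norm x) + K1 x"
        using A1_F[of t x t 0] A1_G[of t x] by simp
      also have "\<dots> \<le> u \<omega>"
        using r L2_pos unfolding u_def x_def[symmetric] Fstar_def
        by (simp add: mult.left_commute) (smt (verit) mult_left_mono norm_ge_zero)
      finally show ?thesis unfolding x_def .
    qed
    have "(\<integral>\<^sup>+\<omega>. ennreal ((norm (H t (X 0 \<omega>) - h t))\<^sup>2) \<partial>M) \<le> ennreal (4 * (\<integral>\<omega>. (u \<omega>)\<^sup>2 \<partial>M))"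
      unfolding h_def using P.var_bound[OF Yi ui u2i bnd] by simp
    also have "4 * (\<integral>\<omega>. (u \<omega>)\<^sup>2 \<partial>M) \<le> 4 * (\<integral>\<omega>. 2 * L2\<^sup>2 * K_rho \<rho> (X 0 \<omega>) + 2 * (Fstar (X 0 \<omega>))\<^sup>2 \<partial>M)"
      using u2 u2i K_int Fs_int by (intro mult_left_mono integral_mono) auto
    also have "\<dots> = B" unfolding B_def EK_def using K_int Fs_int by simp
    finally show ?thesis by (simp add: ennreal_leI)
  qed

  have hm: "h \<in> borel_measurable borel"
  proof -
    have "case_prod (\<lambda>t \<omega>. H t (X 0 \<omega>)) \<in> borel_measurable (borel \<Otimes>\<^sub>M M)"
      using Hcomp[of fst "borel \<Otimes>\<^sub>M M" "\<lambda>p. X 0 (snd p)"] by (simp add: case_prod_beta')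
    then show ?thesis unfolding h_def by (rule P.borel_measurable_lebesgue_integral)
  qed
  have step: "(\<integral>\<^sup>+\<omega>. ennreal ((norm (H (\<theta> j \<omega>) (X (Suc j) \<omega>) - h (\<theta> j \<omega>)))\<^sup>2) \<partial>M) \<le> ennreal B" for j
  proof -
    define E where "E = (\<lambda>i. case i of Init \<Rightarrow> gen_events M \<theta>0 | Dat n \<Rightarrow> gen_events M (X n)
                                    | Noise n \<Rightarrow> gen_events M (\<xi> n))"
    define Ix where "Ix = {Init} \<union> range Dat \<union> Noise ` {1..}"
    have ind: "P.indep_sets E Ix" using indep unfolding E_def Ix_def .
    define J where "J = (\<lambda>j::nat. {Init} \<union> Dat ` {1..j} \<union> Noise ` {1..j})"
    define N where "N = (\<lambda>j. sigma (space M) (\<Union>i\<in>J j. E i))"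
    have EPow: "E i \<subseteq> Pow (space M)" for i
      unfolding E_def by (cases i) (simp_all add: gen_events_Pow)
    have UPow: "(\<Union>i\<in>J j'. E i) \<subseteq> Pow (space M)" for j' using EPow by blast
    have meas_gen: "f \<in> borel_measurable (N j')" if "i \<in> J j'" "E i = gen_events M f" for i j' f
      unfolding N_def using that UPow by (intro gen_events_meas) auto
    have xim: "\<xi> n \<in> borel_measurable M" if "n \<ge> 1" for n
      using \<xi>_gauss[OF that] by (simp add: std_gaussian_vec_def)
    have thetam: "\<theta> i \<in> borel_measurable (N j')" if "i \<le> j'" for i j'
      using that
    proof (induction i)
      case 0
      show ?case using meas_gen[of Init j' \<theta>0] by (simp add: \<theta>_def J_def E_def)
    next
      case (Suc i)
      have a: "\<theta> i \<in> borel_measurable (N j')" using Suc by simp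
      have b: "X (Suc i) \<in> borel_measurable (N j')"
        using Suc.prems by (intro meas_gen[of "Dat (Suc i)"]) (auto simp: J_def E_def)
      have c: "\<xi> (Suc i) \<in> borel_measurable (N j')"
        using Suc.prems by (intro meas_gen[of "Noise (Suc i)"]) (auto simp: J_def E_def)
      have d: "(\<lambda>\<omega>. H (\<theta> i \<omega>) (X (Suc i) \<omega>)) \<in> borel_measurable (N j')" using Hcomp[OF a b] .
      have "\<theta> (Suc i) = (\<lambda>\<omega>. \<theta> i \<omega> - lam *\<^sub>R H (\<theta> i \<omega>) (X (Suc i) \<omega>) + sqrt (2 * lam / \<beta>) *\<^sub>R \<xi> (Suc i) \<omega>)"
        by (simp add: \<theta>_def)
      then show ?case using a c d
        by (simp add: borel_measurable_add borel_measurable_diff borel_measurable_scaleR)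
    qed
    have JIx: "J j' \<subseteq> Ix" for j' unfolding J_def Ix_def by auto
    have Esets: "E i \<subseteq> sets M" if "i \<in> Ix" for i
    proof -
      have "E Init \<subseteq> sets M" using gen_events_sets[OF \<theta>0_meas] by (simp add: E_def)
      moreover have "E (Dat n) \<subseteq> sets M" for n using gen_events_sets[OF X_meas[of n]] by (simp add: E_def)
      moreover have "E (Noise n) \<subseteq> sets M" if "n \<ge> 1" for n
        using gen_events_sets[OF xim[OF that]] by (simp add: E_def)
      ultimately show ?thesis using that unfolding Ix_def by (auto; metis atLeast_iff in_mono)
    qed
    have t1: "\<theta> j \<in> borel_measurable M"
    proof -
      have "sets (N j) \<subseteq> sets M"
        unfolding N_def sets_measure_of[OF UPow]
        using Esets JIx by (intro sets.sigma_sets_subset) blast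
      moreover have "space (N j) = space M" unfolding N_def space_measure_of[OF UPow] ..
      ultimately show ?thesis using thetam[of j j] measurable_mono[of borel borel "N j" M] by auto
    qed
    define I2 where "I2 = (\<lambda>b::bool. if b then J j else {Dat (Suc j)})"
    have sub: "(\<Union>b. I2 b) \<subseteq> Ix" unfolding I2_def using JIx[of j] by (auto simp: Ix_def)
    have coll: "P.indep_sets (\<lambda>b. sigma_sets (space M) (\<Union>i\<in>I2 b. E i)) UNIV"
    proof (rule P.indep_sets_collect_sigma)
      show "P.indep_sets E (\<Union>b\<in>UNIV. I2 b)" using P.indep_sets_mono_index[OF sub ind] by simp
      show "Int_stable (E i)" if "b \<in> UNIV" "i \<in> I2 b" for i b
        unfolding E_def by (cases i) (simp_all add: gen_events_Int_stable)
      show "disjoint_family_on I2 UNIV" unfolding disjoint_family_on_def I2_def J_def by auto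
    qed
    define Z1 where "Z1 = (\<lambda>\<omega>. (\<theta> j \<omega>, 0::real^'m))"
    define Z2 where "Z2 = (\<lambda>\<omega>. (0::real^'d, X (Suc j) \<omega>))"
    have pairm: "(\<lambda>\<omega>. (f \<omega>, g \<omega>)) \<in> borel_measurable N'"
      if "f \<in> borel_measurable N'" "g \<in> borel_measurable N'" for N' :: "'w measure" and f :: "'w \<Rightarrow> real^'d" and g :: "'w \<Rightarrow> real^'m"
      using measurable_Pair[OF that] by (simp add: borel_prod)
    have Z1m: "Z1 \<in> borel_measurable (N j)" unfolding Z1_def by (intro pairm thetam) auto
    have XSm: "X (Suc j) \<in> borel_measurable (sigma (space M) (gen_events M (X (Suc j))))"
      by (rule gen_events_meas[OF subset_refl gen_events_Pow])
    have Z2m: "Z2 \<in> borel_measurable (sigma (space M) (gen_events M (X (Suc j))))"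
      unfolding Z2_def by (intro pairm XSm) auto
    have TT: "sigma_sets (space M) {Z1 -` A \<inter> space M |A. A \<in> sets borel} \<subseteq> sigma_sets (space M) (\<Union>i\<in>I2 True. E i)"
    proof (rule sigma_sets_mono)
      show "{Z1 -` A \<inter> space M |A. A \<in> sets borel} \<subseteq> sigma_sets (space M) (\<Union>i\<in>I2 True. E i)"
        using measurable_sets[OF Z1m]
        by (auto simp: I2_def N_def sets_measure_of[OF UPow] space_measure_of[OF UPow])
    qed
    have FF: "sigma_sets (space M) {Z2 -` A \<inter> space M |A. A \<in> sets borel} \<subseteq> sigma_sets (space M) (\<Union>i\<in>I2 False. E i)"
    proof (rule sigma_sets_mono)
      have eq: "(\<Union>i\<in>I2 False. E i) = gen_events M (X (Suc j))" by (simp add: I2_def E_def)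
      show "{Z2 -` A \<inter> space M |A. A \<in> sets borel} \<subseteq> sigma_sets (space M) (\<Union>i\<in>I2 False. E i)"
        using measurable_sets[OF Z2m] unfolding eq
        by (auto simp: sets_measure_of[OF gen_events_Pow] space_measure_of[OF gen_events_Pow])
    qed
    have Z1M: "Z1 \<in> borel_measurable M" unfolding Z1_def by (intro pairm t1) auto
    have Z2M: "Z2 \<in> borel_measurable M" unfolding Z2_def by (intro pairm) auto
    have ivar: "P.indep_var borel Z1 borel Z2"
      unfolding P.indep_var_def P.indep_vars_def
      apply (intro conjI)
      subgoal using Z1M Z2M by (auto split: bool.split)
      apply (rule P.indep_sets_mono_sets[OF coll])
      subgoal for b using TT FF by (cases b) auto
      done
    have deq: "distr M borel Z1 \<Otimes>\<^sub>M distr M borel Z2 = distr M (borel \<Otimes>\<^sub>M borel) (\<lambda>\<omega>. (Z1 \<omega>, Z2 \<omega>))"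
      using ivar P.indep_var_distribution_eq by blast
    define D where "D = (\<lambda>p. ennreal ((norm (H (fst p) (snd p) - h (fst p)))\<^sup>2))"
    have hfst: "(\<lambda>p. h (fst p)) \<in> borel_measurable (borel \<Otimes>\<^sub>M borel)"
      using measurable_compose[OF measurable_fst[of borel borel] hm] by simp
    have Dm: "D \<in> borel_measurable (borel \<Otimes>\<^sub>M borel)"
      unfolding D_def using Hm hfst by measurable
    have fstm: "fst \<in> measurable (borel :: ((real^'d) \<times> (real^'m)) measure) borel"
      using measurable_fst[of "borel::(real^'d) measure" "borel::(real^'m) measure"] by (simp add: borel_prod)
    have sndm: "snd \<in> measurable (borel :: ((real^'d) \<times> (real^'m)) measure) borel"
      using measurable_snd[of "borel::(real^'d) measure" "borel::(real^'m) measure"] by (simp add: borel_prod)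
    define D2 where "D2 = (\<lambda>p::((real^'d) \<times> (real^'m)) \<times> ((real^'d) \<times> (real^'m)). D (fst (fst p), snd (snd p)))"
    have D2m: "D2 \<in> borel_measurable (borel \<Otimes>\<^sub>M borel)"
    proof -
      have "(\<lambda>p::((real^'d) \<times> (real^'m)) \<times> ((real^'d) \<times> (real^'m)). (fst (fst p), snd (snd p)))
              \<in> measurable (borel \<Otimes>\<^sub>M borel) (borel \<Otimes>\<^sub>M borel)"
        by (intro measurable_Pair measurable_compose[OF measurable_fst fstm] measurable_compose[OF measurable_snd sndm])
      from measurable_compose[OF this Dm] show ?thesis by (simp add: D2_def)
    qed
    interpret Q: prob_space "distr M borel Z2" by (rule P.prob_space_distr) (rule Z2M)
    interpret R: prob_space "distr M borel Z1" by (rule P.prob_space_distr) (rule Z1M)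
    have D2m': "D2 \<in> borel_measurable (distr M borel Z1 \<Otimes>\<^sub>M distr M borel Z2)"
      using D2m by (simp cong: measurable_cong_sets)
    have "(\<integral>\<^sup>+\<omega>. ennreal ((norm (H (\<theta> j \<omega>) (X (Suc j) \<omega>) - h (\<theta> j \<omega>)))\<^sup>2) \<partial>M)
        = (\<integral>\<^sup>+\<omega>. D2 (Z1 \<omega>, Z2 \<omega>) \<partial>M)" by (simp add: D2_def D_def Z1_def Z2_def)
    also have "\<dots> = (\<integral>\<^sup>+p. D2 p \<partial>distr M (borel \<Otimes>\<^sub>M borel) (\<lambda>\<omega>. (Z1 \<omega>, Z2 \<omega>)))"
      by (rule nn_integral_distr[symmetric]) (use Z1M Z2M D2m in auto)
    also have "\<dots> = (\<integral>\<^sup>+p. D2 p \<partial>(distr M borel Z1 \<Otimes>\<^sub>M distr M borel Z2))"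
      by (simp add: deq)
    also have "\<dots> = (\<integral>\<^sup>+s. \<integral>\<^sup>+z. D2 (s, z) \<partial>distr M borel Z2 \<partial>distr M borel Z1)"
      by (rule Q.nn_integral_fst[symmetric]) (rule D2m')
    also have "\<dots> \<le> (\<integral>\<^sup>+s. ennreal B \<partial>distr M borel Z1)"
    proof (rule nn_integral_mono)
      fix s :: "(real^'d) \<times> (real^'m)"
      define t where "t = fst s"
      have Dt: "(\<lambda>x. D (t, x)) \<in> borel_measurable borel"
        using measurable_Pair2[OF Dm, of t] by simp
      have Dt2: "(\<lambda>z. D2 (s, z)) \<in> borel_measurable borel"
        using measurable_Pair2[OF D2m, of s] by simp
      have "(\<integral>\<^sup>+z. D2 (s, z) \<partial>distr M borel Z2) = (\<integral>\<^sup>+\<omega>. D2 (s, Z2 \<omega>) \<partial>M)"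
        by (rule nn_integral_distr) (use Dt2 Z2M in auto)
      also have "\<dots> = (\<integral>\<^sup>+\<omega>. D (t, X (Suc j) \<omega>) \<partial>M)" by (simp add: D2_def Z2_def t_def)
      also have "\<dots> = (\<integral>\<^sup>+x. D (t, x) \<partial>distr M borel (X (Suc j)))"
        by (rule nn_integral_distr[symmetric]) (use Dt in auto)
      also have "\<dots> = (\<integral>\<^sup>+x. D (t, x) \<partial>distr M borel (X 0))"
        by (simp only: X_ident[of "Suc j"])
      also have "\<dots> = (\<integral>\<^sup>+\<omega>. D (t, X 0 \<omega>) \<partial>M)"
        by (rule nn_integral_distr) (use Dt in auto)
      also have "\<dots> \<le> ennreal B" using fixed[of t] by (simp add: D_def)
      finally show "(\<integral>\<^sup>+z. D2 (s, z) \<partial>distr M borel Z2) \<le> ennreal B" .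
    qed
    also have "\<dots> = ennreal B" using R.emeasure_space_1 by simp
    finally show ?thesis .
  qed

  have B_le: "B \<le> exp (- a * lam * real (n * T)) * sbar * (\<integral>\<omega>. V2 (\<theta>0 \<omega>) \<partial>M) + stilde" for n
  proof -
    have EV: "(\<integral>\<omega>. V2 (\<theta>0 \<omega>) \<partial>M) \<ge> 0"
      by (intro integral_nonneg_AE AE_I2) (simp add: V2_def)
    have sb: "sbar \<ge> 0" unfolding sbar_def using EK_pos by simp
    have Fs_nn: "(\<integral>\<omega>. (Fstar (X 0 \<omega>))\<^sup>2 \<partial>M) \<ge> 0" by simp
    have K1_nn: "(\<integral>\<omega>. (K1 (X 0 \<omega>))\<^sup>2 \<partial>M) \<ge> 0" by simp
    have "c0 \<ge> 0" unfolding c0_def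
      using K1_nn a_pos b_pos lmax_pos EK_pos Fs_nn by (intro add_nonneg_nonneg) auto
    then have c1: "c1 \<ge> 0" unfolding c1_def using \<beta>_pos by simp
    have "4 * EK * (L\<^sup>2 + L1\<^sup>2) * c1 * (lmax + 1 / a) \<ge> 0"
      using EK_pos c1 lmax_pos a_pos by simp
    then have "B \<le> stilde" unfolding B_def stilde_def by simp
    moreover have "exp (- a * lam * real (n * T)) * sbar * (\<integral>\<omega>. V2 (\<theta>0 \<omega>) \<partial>M) \<ge> 0"
      using EV sb by simp
    ultimately show ?thesis by linarith
  qed

  show ?thesis
  proof (intro allI impI)
    fix n k assume nk: "1 \<le> k \<and> k \<le> T"
    define j where "j = n * T + k - 1"
    have e: "n * T + k = Suc j" "n * T + k - 1 = j" using nk by (auto simp: j_def)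
    show "(\<integral>\<^sup>+\<omega>. ennreal ((norm (H (\<theta> (n * T + k - 1) \<omega>) (X (n * T + k) \<omega>)
                                  - h (\<theta> (n * T + k - 1) \<omega>)))\<^sup>2) \<partial>M)
           \<le> ennreal (exp (- a * lam * real (n * T)) * sbar * (\<integral>\<omega>. V2 (\<theta>0 \<omega>) \<partial>M) + stilde)"
      unfolding e(2) unfolding e(1) using step[of j] B_le[of n] by (meson ennreal_leI order_trans)
  qed
qed

end
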